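(* Let $\delta\ge0$ and edge weights $\omega_{jk}\in\mathbb{R}$ for $j\in[d\ell]$, $k\in[\ell]$. The optimal value of program $(P'')$ is at least the weight of the maximum weight $d$-to-$1$ matching in the complete bipartite graph between LHS-nodes $[d\ell]$ and RHS-nodes $[\ell]$ with weights $\omega$.
   Context: Program $(P'')$: maximize $\sum_{j,k}x_{jk}\omega_{jk}-\delta\sum_{j,k}(x_{jk}\log x_{jk}+y_{jk}\log y_{jk})$ subject to $\sum_j(x_{jk}+y_{jk})\le d$ for all $k\in[\ell]$, $\sum_k(x_{jk}+y_{jk})=1$ for all $j\in[d\ell]$, $x_{jk},y_{jk}\in[0,1]$ (with $0\log0=0$). A $d$-to-$1$ matching matches each LHS-node to at most one RHS-node and each RHS-node to at most $d$ LHS-nodes; its weight is the sum of weights of matched edges. *)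

theory Defs
  imports Complex_Main
begin

text \<open>Indices are 0-based: LHS-nodes j < d*l, RHS-nodes k < l.\<close>

definition xlogx :: "real \<Rightarrow> real" where
  "xlogx t = (if t = 0 then 0 else t * ln t)"

definition feasibleP :: "nat \<Rightarrow> nat \<Rightarrow> (nat \<Rightarrow> nat \<Rightarrow> real) \<Rightarrow> (nat \<Rightarrow> nat \<Rightarrow> real) \<Rightarrow> bool" where
  "feasibleP d l x y \<longleftrightarrow>
     (\<forall>k<l. (\<Sum>j<d*l. x j k + y j k) \<le> real d) \<and>
     (\<forall>j<d*l. (\<Sum>k<l. x j k + y j k) = 1) \<and>
     (\<forall>j<d*l. \<forall>k<l. 0 \<le> x j k \<and> x j k \<le> 1 \<and> 0 \<le> y j k \<and> y j k \<le> 1)"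

definition objP :: "nat \<Rightarrow> nat \<Rightarrow> real \<Rightarrow> (nat \<Rightarrow> nat \<Rightarrow> real) \<Rightarrow> (nat \<Rightarrow> nat \<Rightarrow> real) \<Rightarrow> (nat \<Rightarrow> nat \<Rightarrow> real) \<Rightarrow> real" where
  "objP d l \<delta> \<omega> x y =
     (\<Sum>j<d*l. \<Sum>k<l. x j k * \<omega> j k)
     - \<delta> * (\<Sum>j<d*l. \<Sum>k<l. xlogx (x j k) + xlogx (y j k))"

definition opt_val_P :: "nat \<Rightarrow> nat \<Rightarrow> real \<Rightarrow> (nat \<Rightarrow> nat \<Rightarrow> real) \<Rightarrow> real" where
  "opt_val_P d l \<delta> \<omega> = (SUP xy \<in> {(x, y). feasibleP d l x y}. objP d l \<delta> \<omega> (fst xy) (snd xy))"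

definition d_to_1_matching :: "nat \<Rightarrow> nat \<Rightarrow> (nat \<times> nat) set \<Rightarrow> bool" where
  "d_to_1_matching d l M \<longleftrightarrow>
     M \<subseteq> {..<d*l} \<times> {..<l} \<and>
     (\<forall>j. card {k. (j, k) \<in> M} \<le> 1) \<and>
     (\<forall>k. card {j. (j, k) \<in> M} \<le> d)"

definition matching_weight :: "(nat \<Rightarrow> nat \<Rightarrow> real) \<Rightarrow> (nat \<times> nat) set \<Rightarrow> real" where
  "matching_weight \<omega> M = (\<Sum>(j, k)\<in>M. \<omega> j k)"

definition max_matching_weight :: "nat \<Rightarrow> nat \<Rightarrow> (nat \<Rightarrow> nat \<Rightarrow> real) \<Rightarrow> real" where
  "max_matching_weight d l \<omega> = Max (matching_weight \<omega> ` {M. d_to_1_matching d l M})"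

end

theory Submission
  imports Defs
begin

lemma xlogx_le0: "0 \<le> t \<Longrightarrow> t \<le> 1 \<Longrightarrow> xlogx t \<le> 0"
  unfolding xlogx_def by (smt (verit) ln_le_zero_iff mult_cancel_right2 zero_le_mult_iff)

lemma xlogx_ge: "0 \<le> t \<Longrightarrow> t \<le> 1 \<Longrightarrow> xlogx t \<ge> -1"
proof (cases "t = 0")
  case False
  assume h: "0 \<le> t" "t \<le> 1"
  hence tp: "t > 0" using False by simp
  have "ln (1/t) \<le> 1/t - 1" using tp by (intro ln_le_minus_one) simp
  hence "- ln t \<le> 1/t - 1" using tp by (simp add: ln_div)
  hence "t * (- ln t) \<le> t * (1/t - 1)" using tp by (intro mult_left_mono) auto
  moreover have "t * (1/t - 1) = 1 - t" using tp by (simp add: field_simps)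
  ultimately have "t * ln t \<ge> t - 1" by simp
  thus ?thesis using False h unfolding xlogx_def by simp
qed (simp add: xlogx_def)

lemma obj_bdd:
  assumes "\<delta> \<ge> 0"
  shows "bdd_above ((\<lambda>xy. objP d l \<delta> \<omega> (fst xy) (snd xy)) ` {(x, y). feasibleP d l x y})"
proof -
  define B where "B = (\<Sum>j<d*l. \<Sum>k<l. \<bar>\<omega> j k\<bar>) + \<delta> * (\<Sum>j<d*l. \<Sum>k<l. 2::real)"
  have "objP d l \<delta> \<omega> x y \<le> B" if f: "feasibleP d l x y" for x y
  proof -
    have b: "\<And>j k. j < d*l \<Longrightarrow> k < l \<Longrightarrow> 0 \<le> x j k \<and> x j k \<le> 1 \<and> 0 \<le> y j k \<and> y j k \<le> 1"
      using f unfolding feasibleP_def by blast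
    have 1: "(\<Sum>j<d*l. \<Sum>k<l. x j k * \<omega> j k) \<le> (\<Sum>j<d*l. \<Sum>k<l. \<bar>\<omega> j k\<bar>)"
    proof (intro sum_mono)
      fix j k assume "j \<in> {..<d*l}" "k \<in> {..<l}"
      then have "0 \<le> x j k" "x j k \<le> 1" using b by auto
      then show "x j k * \<omega> j k \<le> \<bar>\<omega> j k\<bar>"
      proof -
        have "x j k * \<omega> j k \<le> \<bar>x j k * \<omega> j k\<bar>" by (rule abs_ge_self)
        also have "\<dots> = x j k * \<bar>\<omega> j k\<bar>" using \<open>0 \<le> x j k\<close> by (simp add: abs_mult)
        also have "\<dots> \<le> \<bar>\<omega> j k\<bar>" using \<open>x j k \<le> 1\<close> \<open>0 \<le> x j k\<close> by (intro mult_left_le_one_le) auto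
        finally show ?thesis .
      qed
    qed
    have 2: "- (\<Sum>j<d*l. \<Sum>k<l. 2::real) \<le> (\<Sum>j<d*l. \<Sum>k<l. xlogx (x j k) + xlogx (y j k))"
      unfolding sum_negf[symmetric]
    proof (intro sum_mono)
      fix j k assume "j \<in> {..<d*l}" "k \<in> {..<l}"
      then have "-1 \<le> xlogx (x j k)" "-1 \<le> xlogx (y j k)" using b xlogx_ge by auto
      then show "- 2 \<le> xlogx (x j k) + xlogx (y j k)" by simp
    qed
    have "- \<delta> * (\<Sum>j<d*l. \<Sum>k<l. xlogx (x j k) + xlogx (y j k)) \<le> \<delta> * (\<Sum>j<d*l. \<Sum>k<l. 2::real)"
      using mult_left_mono[OF 2 assms] by simp
    then show ?thesis using 1 unfolding objP_def B_def by simp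
  qed
  then show ?thesis by (intro bdd_aboveI[of _ B]) auto
qed

theorem mainTheorem9:
  fixes d l :: nat and \<delta> :: real and \<omega> :: "nat \<Rightarrow> nat \<Rightarrow> real"
  assumes "\<delta> \<ge> 0"
  shows "opt_val_P d l \<delta> \<omega> \<ge> max_matching_weight d l \<omega>"
proof -
  let ?MS = "{M. d_to_1_matching d l M}"
  have fin: "finite ?MS"
    by (rule finite_subset[of _ "Pow ({..<d*l} \<times> {..<l})"]) (auto simp: d_to_1_matching_def)
  have ne: "{} \<in> ?MS" by (simp add: d_to_1_matching_def)
  obtain M where MM: "M \<in> ?MS" and Meq: "max_matching_weight d l \<omega> = matching_weight \<omega> M"
  proof -
    have "Max (matching_weight \<omega> ` ?MS) \<in> matching_weight \<omega> ` ?MS"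
      using fin ne by (intro Max_in) auto
    then show ?thesis using that unfolding max_matching_weight_def by blast
  qed
  have Msub: "M \<subseteq> {..<d*l} \<times> {..<l}" and Mr: "\<And>j. card {k. (j, k) \<in> M} \<le> 1"
    and Mc: "\<And>k. card {j. (j, k) \<in> M} \<le> d" using MM unfolding d_to_1_matching_def by auto
  define x :: "nat \<Rightarrow> nat \<Rightarrow> real" where "x j k = of_bool ((j, k) \<in> M)" for j k
  define r where "r j = (\<Sum>k<l. x j k)" for j
  define c where "c k = (\<Sum>j<d*l. x j k)" for k
  define N where "N = (\<Sum>j<d*l. 1 - r j)"
  define y where "y j k = (1 - r j) * ((real d - c k) / N)" for j k
  have r01: "0 \<le> r j \<and> r j \<le> 1" for j
  proof -
    have "r j = real (card ({..<l} \<inter> {k. (j, k) \<in> M}))"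
      unfolding r_def x_def by (simp add: sum_of_bool_eq)
    moreover have "finite {k. (j, k) \<in> M}" by (rule finite_subset[of _ "{..<l}"]) (use Msub in auto)
    then have "card ({..<l} \<inter> {k. (j, k) \<in> M}) \<le> card {k. (j, k) \<in> M}"
      by (rule card_mono) auto
    ultimately show ?thesis using Mr[of j] by simp
  qed
  have c0d: "0 \<le> c k \<and> c k \<le> real d" for k
  proof -
    have "c k = real (card ({..<d*l} \<inter> {j. (j, k) \<in> M}))"
      unfolding c_def x_def by (simp add: sum_of_bool_eq)
    moreover have "finite {j. (j, k) \<in> M}" by (rule finite_subset[of _ "{..<d*l}"]) (use Msub in auto)
    then have "card ({..<d*l} \<inter> {j. (j, k) \<in> M}) \<le> card {j. (j, k) \<in> M}"
      by (rule card_mono) auto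
    ultimately show ?thesis using Mc[of k] by simp
  qed
  have sumc: "(\<Sum>k<l. real d - c k) = N"
  proof -
    have "(\<Sum>k<l. c k) = (\<Sum>j<d*l. r j)" unfolding c_def r_def by (rule sum.swap)
    then show ?thesis unfolding N_def by (simp add: sum_subtractf)
  qed
  have N0: "N \<ge> 0" unfolding N_def by (intro sum_nonneg) (use r01 in auto)
  have ckN: "real d - c k \<le> N" if "k < l" for k
  proof -
    have "real d - c k \<le> (\<Sum>k<l. real d - c k)"
      by (rule member_le_sum) (use that c0d in auto)
    then show ?thesis using sumc by simp
  qed
  have x01: "0 \<le> x j k \<and> x j k \<le> 1" for j k unfolding x_def by simp
  have y01: "0 \<le> y j k \<and> y j k \<le> 1" if "k < l" for j k
  proof -
    have a: "0 \<le> (real d - c k) / N" using c0d[of k] N0 by simp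
    have b: "(real d - c k) / N \<le> 1"
      using ckN[OF that] N0 by (cases "N = 0") (auto simp: divide_le_eq_1)
    have "0 \<le> 1 - r j" "1 - r j \<le> 1" using r01[of j] by auto
    then show ?thesis unfolding y_def
      using mult_nonneg_nonneg[OF _ a, of "1 - r j"] mult_le_one[OF _ _ b, of "1 - r j"] a by blast
  qed
  have feas: "feasibleP d l x y"
    unfolding feasibleP_def
  proof (intro conjI allI impI)
    fix k assume k: "k < l"
    have "(\<Sum>j<d*l. x j k + y j k) = c k + (\<Sum>j<d*l. 1 - r j) * ((real d - c k) / N)"
    proof -
      have "(\<Sum>j<d*l. y j k) = (\<Sum>j<d*l. 1 - r j) * ((real d - c k) / N)"
        unfolding y_def by (rule sum_distrib_right[symmetric])
      then show ?thesis unfolding sum.distrib c_def by simp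
    qed
    also have "\<dots> = c k + N * ((real d - c k) / N)" unfolding N_def by simp
    also have "\<dots> \<le> real d" using c0d[of k] by (cases "N = 0") auto
    finally show "(\<Sum>j<d*l. x j k + y j k) \<le> real d" .
  next
    fix j assume j: "j < d*l"
    have "(\<Sum>k<l. x j k + y j k) = r j + (1 - r j) * ((\<Sum>k<l. real d - c k) / N)"
      unfolding r_def y_def by (simp add: sum.distrib sum_distrib_left sum_divide_distrib)
    also have "\<dots> = r j + (1 - r j) * (N / N)" using sumc by simp
    also have "\<dots> = 1"
    proof (cases "N = 0")
      case True
      have "\<forall>i\<in>{..<d*l}. 1 - r i = 0"
        using True unfolding N_def by (subst sum_nonneg_eq_0_iff[symmetric]) (use r01 in auto)
      then have "r j = 1" using j by auto
      then show ?thesis by simp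
    qed simp
    finally show "(\<Sum>k<l. x j k + y j k) = 1" .
  next
    fix j k assume "j < d*l" "k < l"
    then show "0 \<le> x j k" "x j k \<le> 1" "0 \<le> y j k" "y j k \<le> 1" using x01 y01 by auto
  qed
  have w: "(\<Sum>j<d*l. \<Sum>k<l. x j k * \<omega> j k) = matching_weight \<omega> M"
  proof -
    have "(\<Sum>j<d*l. \<Sum>k<l. x j k * \<omega> j k) = (\<Sum>p\<in>{..<d*l} \<times> {..<l}. x (fst p) (snd p) * \<omega> (fst p) (snd p))"
      by (simp add: sum.cartesian_product case_prod_beta)
    also have "\<dots> = (\<Sum>p\<in>{..<d*l} \<times> {..<l}. if p \<in> M then \<omega> (fst p) (snd p) else 0)"
      by (intro sum.cong) (auto simp: x_def)
    also have "\<dots> = (\<Sum>p\<in>M. \<omega> (fst p) (snd p))"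
      using Msub by (simp add: sum.If_cases Int_absorb1)
    also have "\<dots> = matching_weight \<omega> M" unfolding matching_weight_def
      by (simp add: case_prod_beta)
    finally show ?thesis .
  qed
  have ent: "(\<Sum>j<d*l. \<Sum>k<l. xlogx (x j k) + xlogx (y j k)) \<le> 0"
  proof (intro sum_nonpos)
    fix j k assume "k \<in> {..<l}"
    then have "xlogx (x j k) = 0" "xlogx (y j k) \<le> 0"
      using y01 xlogx_le0 by (auto simp: x_def xlogx_def[of 1] xlogx_def[of 0])
    then show "xlogx (x j k) + xlogx (y j k) \<le> 0" by simp
  qed
  have "matching_weight \<omega> M \<le> objP d l \<delta> \<omega> x y"
    unfolding objP_def w using ent assms by (simp add: mult_nonneg_nonpos)
  also have "\<dots> \<le> opt_val_P d l \<delta> \<omega>"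
    unfolding opt_val_P_def
    using cSUP_upper[OF _ obj_bdd[OF assms, of d l \<omega>], of "(x, y)"] feas by simp
  finally show ?thesis using Meq by simp
qed

end
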